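(* Let $(X,d,\mu)$ be a complete metric measure space with $\mu$ a doubling Borel regular measure, let $\Omega\subset X$ be a bounded domain, let $0<s<1$, and let $F\subset X$ be a measurable set with $F\setminus\Omega\neq\emptyset$. If $\mathcal{A}(F)\ne\emptyset$, then there exists a minimizer of $\mathcal{J}^s_\Omega$.
   Context: $\mu$ is doubling if there is $C_\mu\ge1$ with $0<\mu(B(x,2r))\le C_\mu\mu(B(x,r))<\infty$ for all $x,r$. A domain is a connected open set. Let $K_s(x,y)=\frac{2}{d(x,y)^s[\mu(B(x,d(x,y)))+\mu(B(y,d(x,y)))]}$, $L_s(A,B)=\int_A\int_BK_s(x,y)\,d\mu(y)\,d\mu(x)$, and $\mathcal{J}^s_\Omega(E)=L_s(E\cap\Omega,X\setminus E)+L_s(E\setminus\Omega,\Omega\setminus E)$. Let $\mathcal{A}(F)=\{E\subset X\text{ measurable}:E\setminus\Omega=F\setminus\Omega,\ \mathcal{J}^s_\Omega(E)<\infty\}$. A measurable $E$ is a minimizer of $\mathcal{J}^s_\Omega$ (with respect to $F$) if $\mathcal{J}^s_\Omega(E)<\infty$, $E\setminus\Omega=F\setminus\Omega$, and $\mathcal{J}^s_\Omega(E)\le\mathcal{J}^s_\Omega(E')$ for all measurable $E'$ with $E'\setminus\Omega=F\setminus\Omega$. *)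

theory Defs
  imports "HOL-Analysis.Analysis"
begin

text \<open>The metric measure space is the whole type 'a (X = UNIV) with measure M.\<close>

definition doubling_measure :: "('a::metric_space) measure \<Rightarrow> bool" where
  "doubling_measure M \<longleftrightarrow> (\<exists>C::real. C \<ge> 1 \<and>
     (\<forall>x r. r > 0 \<longrightarrow>
        0 < emeasure M (ball x (2*r)) \<and>
        emeasure M (ball x (2*r)) \<le> ennreal C * emeasure M (ball x r) \<and>
        emeasure M (ball x r) < \<infinity>))"

definition borel_regular :: "('a::metric_space) measure \<Rightarrow> bool" where
  "borel_regular M \<longleftrightarrow> sets borel \<subseteq> sets M \<and>
     (\<forall>A\<in>sets M. \<exists>B\<in>sets borel. A \<subseteq> B \<and> emeasure M B = emeasure M A)"

definition domain :: "('a::topological_space) set \<Rightarrow> bool" where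
  "domain \<Omega> \<longleftrightarrow> open \<Omega> \<and> connected \<Omega>"

text \<open>Kernel K_s; on the diagonal the formula gives 2/0, taken as \<infinity>.\<close>
definition Kern :: "('a::metric_space) measure \<Rightarrow> real \<Rightarrow> 'a \<Rightarrow> 'a \<Rightarrow> ennreal" where
  "Kern M s x y = (if x = y then \<infinity> else
     ennreal (2 / (dist x y powr s *
        (measure M (ball x (dist x y)) + measure M (ball y (dist x y))))))"

definition Ls :: "('a::metric_space) measure \<Rightarrow> real \<Rightarrow> 'a set \<Rightarrow> 'a set \<Rightarrow> ennreal" where
  "Ls M s A B = (\<integral>\<^sup>+ x \<in> A. (\<integral>\<^sup>+ y \<in> B. Kern M s x y \<partial>M) \<partial>M)"

definition Js :: "('a::metric_space) measure \<Rightarrow> real \<Rightarrow> 'a set \<Rightarrow> 'a set \<Rightarrow> ennreal" where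
  "Js M s \<Omega> E = Ls M s (E \<inter> \<Omega>) (UNIV - E) + Ls M s (E - \<Omega>) (\<Omega> - E)"

definition admissible :: "('a::metric_space) measure \<Rightarrow> real \<Rightarrow> 'a set \<Rightarrow> 'a set \<Rightarrow> 'a set set" where
  "admissible M s \<Omega> F = {E \<in> sets M. E - \<Omega> = F - \<Omega> \<and> Js M s \<Omega> E < \<infinity>}"

definition is_minimizer :: "('a::metric_space) measure \<Rightarrow> real \<Rightarrow> 'a set \<Rightarrow> 'a set \<Rightarrow> 'a set \<Rightarrow> bool" where
  "is_minimizer M s \<Omega> F E \<longleftrightarrow> E \<in> sets M \<and> Js M s \<Omega> E < \<infinity> \<and> E - \<Omega> = F - \<Omega> \<and>
     (\<forall>E'\<in>sets M. E' - \<Omega> = F - \<Omega> \<longrightarrow> Js M s \<Omega> E \<le> Js M s \<Omega> E')"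

end

theory Submission
  imports Defs
begin


locale dbl =
  fixes M :: "('a::metric_space) measure"
  assumes spM: "space M = UNIV"
    and dblM: "doubling_measure M"
    and borM: "sets borel \<subseteq> sets M"
begin

lemma open_sets: "open U \<Longrightarrow> U \<in> sets M"
  using borM by auto

lemma ball_sets[simp]: "ball x r \<in> sets M"
  by (simp add: open_sets)

definition CC where "CC = (SOME C::real. C \<ge> 1 \<and>
     (\<forall>x r. r > 0 \<longrightarrow>
        0 < emeasure M (ball x (2*r)) \<and>
        emeasure M (ball x (2*r)) \<le> ennreal C * emeasure M (ball x r) \<and>
        emeasure M (ball x r) < \<infinity>))"

lemma CC: "CC \<ge> 1" "\<And>x r. r > 0 \<Longrightarrow> 0 < emeasure M (ball x (2*r))"
  "\<And>x r. r > 0 \<Longrightarrow> emeasure M (ball x (2*r)) \<le> ennreal CC * emeasure M (ball x r)"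
  "\<And>x r. r > 0 \<Longrightarrow> emeasure M (ball x r) < \<infinity>"
proof -
  have "\<exists>C::real. C \<ge> 1 \<and>
     (\<forall>x r. r > 0 \<longrightarrow>
        0 < emeasure M (ball x (2*r)) \<and>
        emeasure M (ball x (2*r)) \<le> ennreal C * emeasure M (ball x r) \<and>
        emeasure M (ball x r) < \<infinity>)" using dblM unfolding doubling_measure_def by blast
  from someI_ex[OF this] show "CC \<ge> 1" "\<And>x r. r > 0 \<Longrightarrow> 0 < emeasure M (ball x (2*r))"
  "\<And>x r. r > 0 \<Longrightarrow> emeasure M (ball x (2*r)) \<le> ennreal CC * emeasure M (ball x r)"
  "\<And>x r. r > 0 \<Longrightarrow> emeasure M (ball x r) < \<infinity>" unfolding CC_def by blast+
qed

lemma ball_fin: "emeasure M (ball x r) < \<infinity>"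
proof (cases "r > 0")
  case True then show ?thesis using CC(4) by blast
next
  case False then have "ball x r = {}" by auto
  then show ?thesis by (metis emeasure_empty infinity_ennreal_def ennreal_zero_less_top)
qed

lemma ball_pos: "r > 0 \<Longrightarrow> 0 < emeasure M (ball x r)"
  using CC(2)[of "r/2" x] by simp

lemma ball_iter: "r > 0 \<Longrightarrow> emeasure M (ball x (2^n * r)) \<le> ennreal (CC^n) * emeasure M (ball x r)"
proof (induction n)
  case 0 then show ?case by simp
next
  case (Suc n)
  have "emeasure M (ball x (2^Suc n * r)) = emeasure M (ball x (2 * (2^n * r)))"
    by (simp add: mult.assoc)
  also have "\<dots> \<le> ennreal CC * emeasure M (ball x (2^n * r))"
    using CC(3) Suc.prems by simp
  also have "\<dots> \<le> ennreal CC * (ennreal (CC^n) * emeasure M (ball x r))"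
    using Suc by (intro mult_left_mono) auto
  also have "\<dots> = ennreal (CC^Suc n) * emeasure M (ball x r)"
    using CC(1) by (simp add: ennreal_mult' mult.assoc)
  finally show ?case .
qed

lemma sigma_finite: "sigma_finite_measure M"
proof
  obtain x0 :: 'a where True by auto
  show "\<exists>A. countable A \<and> A \<subseteq> sets M \<and> \<Union> A = space M \<and> (\<forall>a\<in>A. emeasure M a \<noteq> \<infinity>)"
  proof (intro exI[of _ "range (\<lambda>n::nat. ball x0 (real n))"] conjI)
    show "\<Union> (range (\<lambda>n::nat. ball x0 (real n))) = space M"
      using reals_Archimedean2 by (auto simp: spM)
  qed (use ball_fin in \<open>auto simp: less_top\<close>)
qed

lemma sep_card:
  fixes T :: "'a set"
  assumes r: "r > 0" and T: "finite T" "T \<subseteq> ball x0 R"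
    and sep: "\<forall>a\<in>T. \<forall>b\<in>T. a \<noteq> b \<longrightarrow> r \<le> dist a b"
    and n: "2*R + r \<le> 2^n*(r/2)"
  shows "real (card T) \<le> CC^n"
proof (cases "T = {}")
  case True then show ?thesis using CC(1) by simp
next
  case False
  then obtain z0 where "z0 \<in> T" by auto
  then have R: "R > 0" using T by (meson \<open>z0 \<in> T\<close> in_mono mem_ball order_le_less_trans zero_le_dist)
  define Big where "Big = ball x0 (R + r/2)"
  have BigT: "emeasure M Big \<le> ennreal (CC^n) * emeasure M (ball z (r/2))" if "z \<in> T" for z
  proof -
    have "Big \<subseteq> ball z (2^n*(r/2))"
    proof
      fix w assume "w \<in> Big"
      then have a: "dist x0 w < R + r/2" by (simp add: Big_def)
      have b: "dist x0 z < R" using that T by auto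
      have t: "dist z w \<le> dist x0 z + dist x0 w" using dist_triangle[of z w x0] by (simp add: dist_commute)
      have "dist z w < 2^n*(r/2)" using n a b t r by linarith
      then show "w \<in> ball z (2^n*(r/2))" by simp
    qed
    then have "emeasure M Big \<le> emeasure M (ball z (2^n*(r/2)))"
      by (intro emeasure_mono) auto
    also have "\<dots> \<le> ennreal (CC^n) * emeasure M (ball z (r/2))"
      using ball_iter[of "r/2" z n] r by simp
    finally show ?thesis .
  qed
  have disj: "disjoint_family_on (\<lambda>z. ball z (r/2)) T"
    unfolding disjoint_family_on_def
  proof (intro ballI impI)
    fix a b assume ab: "a \<in> T" "b \<in> T" "a \<noteq> b"
    show "ball a (r/2) \<inter> ball b (r/2) = {}"
    proof (rule ccontr)
      assume "ball a (r/2) \<inter> ball b (r/2) \<noteq> {}"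
      then obtain w where "dist a w < r/2" "dist b w < r/2" by auto
      then have "dist a b < r" using dist_triangle[of a b w] by (simp add: dist_commute)
      then show False using sep ab by force
    qed
  qed
  have sub: "(\<Union>z\<in>T. ball z (r/2)) \<subseteq> Big"
  proof clarify
    fix z w assume "z \<in> T" "w \<in> ball z (r/2)"
    then have "dist x0 z < R" "dist z w < r/2" using T by auto
    then show "w \<in> Big" unfolding Big_def using dist_triangle[of x0 w z] by simp
  qed
  have "of_nat (card T) * emeasure M Big = (\<Sum>z\<in>T. emeasure M Big)" by simp
  also have "\<dots> \<le> (\<Sum>z\<in>T. ennreal (CC^n) * emeasure M (ball z (r/2)))"
    using BigT by (intro sum_mono) auto
  also have "\<dots> = ennreal (CC^n) * (\<Sum>z\<in>T. emeasure M (ball z (r/2)))"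
    by (simp add: sum_distrib_left)
  also have "\<dots> = ennreal (CC^n) * emeasure M (\<Union>z\<in>T. ball z (r/2))"
    using sum_emeasure[of "\<lambda>z. ball z (r/2)" T M] disj T ball_sets by (metis image_subsetI)
  also have "\<dots> \<le> ennreal (CC^n) * emeasure M Big"
    using sub by (intro mult_left_mono emeasure_mono) (auto simp: Big_def)
  finally have le: "of_nat (card T) * emeasure M Big \<le> ennreal (CC^n) * emeasure M Big" .
  have pos: "0 < emeasure M Big" unfolding Big_def using ball_pos R r by simp
  have fin: "emeasure M Big < \<infinity>" unfolding Big_def by (rule ball_fin)
  obtain b where b: "emeasure M Big = ennreal b" "b > 0" using pos fin
    by (metis ennreal_cases ennreal_less_zero_iff infinity_ennreal_def less_irrefl)
  have "ennreal (real (card T) * b) \<le> ennreal (CC^n * b)"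
    using le b CC(1) by (simp add: ennreal_mult' ennreal_of_nat_eq_real_of_nat)
  then have "real (card T) * b \<le> CC^n * b"
    using b CC(1) by (subst (asm) ennreal_le_iff) auto
  then show ?thesis using b by simp
qed

lemma sep_finite:
  fixes S :: "'a set"
  assumes r: "r > 0" and S: "S \<subseteq> ball x0 R"
    and sep: "\<forall>a\<in>S. \<forall>b\<in>S. a \<noteq> b \<longrightarrow> r \<le> dist a b"
  shows "finite S"
proof (rule ccontr)
  assume inf: "\<not> finite S"
  have "1 < (2::real)" by simp
  from real_arch_pow[OF this, of "(2*R + r)/(r/2)"] obtain n where
    "(2*R + r)/(r/2) < 2^n" by auto
  then have n: "2*R + r \<le> 2^n*(r/2)" using r by (simp add: field_simps)
  obtain T where T: "finite T" "card T = nat \<lceil>CC^n\<rceil> + 1" "T \<subseteq> S"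
    using infinite_arbitrarily_large[OF inf] by blast
  have "real (card T) \<le> CC^n"
    using sep_card[OF r T(1) _ _ n, of x0] T S sep by blast
  then show False using T(2) by linarith
qed

lemma maximal_sep:
  assumes r: "r > 0"
  shows "\<exists>S::'a set. countable S \<and> (\<forall>x. \<exists>q\<in>S. dist x q < r)"
proof -
  define A where "A = {S::'a set. \<forall>a\<in>S. \<forall>b\<in>S. a \<noteq> b \<longrightarrow> r \<le> dist a b}"
  have "\<forall>C\<in>chains A. \<Union>C \<in> A"
  proof
    fix C assume C: "C \<in> chains A"
    show "\<Union>C \<in> A" unfolding A_def
    proof (intro CollectI ballI impI)
      fix a b assume "a \<in> \<Union>C" "b \<in> \<Union>C" "a \<noteq> b"
      then obtain X Y where XY: "X \<in> C" "Y \<in> C" "a \<in> X" "b \<in> Y" by auto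
      then have o: "X \<subseteq> Y \<or> Y \<subseteq> X" using C by (auto simp: chains_def chain_subset_def)
      have "C \<subseteq> A" using C by (simp add: chains_def)
      then have XA: "X \<in> A" "Y \<in> A" using XY by auto
      show "r \<le> dist a b"
      proof (cases "X \<subseteq> Y")
        case True
        then have "a \<in> Y" "b \<in> Y" using XY by auto
        then show ?thesis using XA(2) \<open>a \<noteq> b\<close> unfolding A_def by blast
      next
        case False
        then have "Y \<subseteq> X" using o by blast
        then have "a \<in> X" "b \<in> X" using XY by auto
        then show ?thesis using XA(1) \<open>a \<noteq> b\<close> unfolding A_def by blast
      qed
    qed
  qed
  from Zorn_Lemma[OF this] obtain S where S: "S \<in> A" and max: "\<forall>X\<in>A. S \<subseteq> X \<longrightarrow> X = S"
    by blast
  obtain x0 :: 'a where True by auto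
  have "countable S"
  proof -
    have eq: "(\<Union>n::nat. S \<inter> ball x0 (real n)) = S"
      using reals_Archimedean2 by auto
    have fin: "finite (S \<inter> ball x0 (real n))" for n
      by (rule sep_finite[OF r, of _ x0 "real n"]) (use S in \<open>auto simp: A_def\<close>)
    have "countable (\<Union>n::nat. S \<inter> ball x0 (real n))"
      by (rule countable_UN[of UNIV]) (auto intro: countable_finite fin)
    then show ?thesis by (simp only: eq)
  qed
  moreover have "\<exists>q\<in>S. dist x q < r" for x
  proof (rule ccontr)
    assume "\<not> (\<exists>q\<in>S. dist x q < r)"
    then have "insert x S \<in> A" using S r unfolding A_def
      by (simp add: dist_commute not_less)
    then have "insert x S = S" using max by blast
    then have "x \<in> S" by auto
    then show False using \<open>\<not> (\<exists>q\<in>S. dist x q < r)\<close> r by auto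
  qed
  ultimately show ?thesis by blast
qed

lemma separable: "\<exists>D::'a set. countable D \<and> (\<forall>x e. e > 0 \<longrightarrow> (\<exists>q\<in>D. dist x q < e))"
proof -
  have "\<forall>k::nat. \<exists>S::'a set. countable S \<and> (\<forall>x. \<exists>q\<in>S. dist x q < 1/(real k + 1))"
    by (simp add: maximal_sep)
  from choice[OF this] obtain S :: "nat \<Rightarrow> 'a set" where S0: "\<forall>k. countable (S k) \<and> (\<forall>x. \<exists>q\<in>S k. dist x q < 1/(real k + 1))"
    by blast
  then have S: "\<And>k. countable (S k)" "\<And>k x. \<exists>q\<in>S k. dist x q < 1/(real k + 1)" by auto
  show ?thesis
  proof (intro exI[of _ "\<Union>k. S k"] conjI allI impI)
    show "countable (\<Union>k. S k)" using S(1) by auto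
    fix x and e :: real assume "e > 0"
    then obtain k :: nat where "1/(real k + 1) < e"
      by (metis add.commute add_pos_nonneg nat_approx_posE of_nat_0_le_iff of_nat_Suc)
    then show "\<exists>q\<in>\<Union>k. S k. dist x q < e" using S(2)[of k x] by force
  qed
qed

end



context dbl begin

lemma ball_approx:
  assumes y: "y < emeasure M (ball x q)"
  shows "\<exists>r<q. y < emeasure M (ball x r)"
proof -
  have q: "q > 0"
  proof (rule ccontr)
    assume "\<not> q > 0" then have "ball x q = {}" by auto
    then show False using y by (metis emeasure_empty not_less_zero)
  qed
  define A where "A n = ball x (q - q/(real n + 2))" for n :: nat
  have inc: "incseq A" unfolding A_def incseq_def
  proof (intro allI impI subsetI)
    fix m n :: nat and z assume mn: "m \<le> n" and z: "z \<in> ball x (q - q/(real m + 2))"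
    have "q/(real n + 2) \<le> q/(real m + 2)" using q mn by (intro divide_left_mono) auto
    then show "z \<in> ball x (q - q/(real n + 2))" using z by auto
  qed
  have un: "(\<Union>n. A n) = ball x q"
  proof
    have "q/(real n + 2) > 0" for n using q by simp
    then show "(\<Union>n. A n) \<subseteq> ball x q" unfolding A_def by (auto simp: subset_iff) (smt (verit))
    show "ball x q \<subseteq> (\<Union>n. A n)"
    proof
      fix z assume "z \<in> ball x q"
      then have d: "dist x z < q" by simp
      obtain n :: nat where n: "q/(q - dist x z) < real n" using reals_Archimedean2 by blast
      have p: "0 < q - dist x z" using d by simp
      have "q < real n * (q - dist x z)" using n p by (simp add: pos_divide_less_eq)
      then have "q < (real n + 2) * (q - dist x z)" using p by (simp add: ring_distribs)
      then have "q/(real n + 2) < q - dist x z" by (simp add: pos_divide_less_eq mult.commute)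
      then show "z \<in> (\<Union>n. A n)" unfolding A_def by (auto intro!: exI[of _ n])
    qed
  qed
  have "(SUP n. emeasure M (A n)) = emeasure M (ball x q)"
  proof -
    have "range A \<subseteq> sets M" by (auto simp: A_def)
    from SUP_emeasure_incseq[OF this inc] un show ?thesis by simp
  qed
  with y have "y < (SUP n. emeasure M (A n))" by simp
  then obtain n where "y < emeasure M (A n)" by (auto simp: less_SUP_iff)
  moreover have "q - q/(real n + 2) < q" using q by simp
  ultimately show ?thesis unfolding A_def by blast
qed

lemma ball_lsc_meas: "(\<lambda>x. emeasure M (ball x q)) \<in> borel_measurable M"
proof (rule borel_measurableI_greater)
  fix y
  have "open {x. y < emeasure M (ball x q)}"
    unfolding open_dist
  proof (intro ballI)
    fix x assume "x \<in> {x. y < emeasure M (ball x q)}"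
    then obtain r where r: "r < q" "y < emeasure M (ball x r)" using ball_approx by blast
    show "\<exists>e>0. \<forall>x'. dist x' x < e \<longrightarrow> x' \<in> {x. y < emeasure M (ball x q)}"
    proof (intro exI[of _ "q - r"] conjI allI impI)
      fix x' assume "dist x' x < q - r"
      have "ball x r \<subseteq> ball x' q"
      proof
        fix w assume "w \<in> ball x r"
        then have "dist x w < r" by simp
        moreover have "dist x' w \<le> dist x' x + dist x w" by (rule dist_triangle)
        ultimately show "w \<in> ball x' q" using \<open>dist x' x < q - r\<close> by simp
      qed
      then have "emeasure M (ball x r) \<le> emeasure M (ball x' q)" by (intro emeasure_mono) auto
      then show "x' \<in> {x. y < emeasure M (ball x q)}" using r by auto
    qed (use r in auto)
  qed
  then show "{x \<in> space M. y < emeasure M (ball x q)} \<in> sets M"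
    using open_sets spM by simp
qed

lemma ball_comp_meas:
  assumes h[measurable]: "h \<in> measurable N M" and rho[measurable]: "rho \<in> borel_measurable N"
  shows "(\<lambda>z. emeasure M (ball (h z) (rho z))) \<in> borel_measurable N"
proof (rule borel_measurableI_greater)
  fix y
  have eq: "{z \<in> space N. y < emeasure M (ball (h z) (rho z))} =
    (\<Union>q\<in>\<rat>. {z \<in> space N. q < rho z} \<inter> {z \<in> space N. y < emeasure M (ball (h z) q)})"
  proof (intro equalityI subsetI)
    fix z assume "z \<in> {z \<in> space N. y < emeasure M (ball (h z) (rho z))}"
    then have z: "z \<in> space N" "y < emeasure M (ball (h z) (rho z))" by auto
    then obtain r where r: "r < rho z" "y < emeasure M (ball (h z) r)" using ball_approx by blast
    obtain q where q: "q \<in> \<rat>" "r < q" "q < rho z" using Rats_dense_in_real[OF r(1)] by blast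
    have "emeasure M (ball (h z) r) \<le> emeasure M (ball (h z) q)" using q by (intro emeasure_mono) auto
    show "z \<in> (\<Union>q\<in>\<rat>. {z \<in> space N. q < rho z} \<inter> {z \<in> space N. y < emeasure M (ball (h z) q)})"
    proof (rule UN_I[OF q(1)])
      show "z \<in> {z \<in> space N. q < rho z} \<inter> {z \<in> space N. y < emeasure M (ball (h z) q)}"
        using q z r \<open>emeasure M (ball (h z) r) \<le> emeasure M (ball (h z) q)\<close> by (auto intro: order_less_le_trans)
    qed
  next
    fix z assume "z \<in> (\<Union>q\<in>\<rat>. {z \<in> space N. q < rho z} \<inter> {z \<in> space N. y < emeasure M (ball (h z) q)})"
    then obtain q where q: "q < rho z" "y < emeasure M (ball (h z) q)" "z \<in> space N" by auto
    have "emeasure M (ball (h z) q) \<le> emeasure M (ball (h z) (rho z))" using q by (intro emeasure_mono) auto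
    then show "z \<in> {z \<in> space N. y < emeasure M (ball (h z) (rho z))}" using q by auto
  qed
  have m: "(\<lambda>z. emeasure M (ball (h z) q)) \<in> borel_measurable N" for q
    using measurable_compose[OF h ball_lsc_meas] by simp
  show "{z \<in> space N. y < emeasure M (ball (h z) (rho z))} \<in> sets N"
    unfolding eq
  proof (intro sets.countable_UN'' countable_rat sets.Int)
    fix q show "{z \<in> space N. q < rho z} \<in> sets N" by measurable
    show "{z \<in> space N. y < emeasure M (ball (h z) q)} \<in> sets N" using m[of q] by measurable
  qed
qed

lemma dist_meas: "(\<lambda>z. dist (fst z) (snd z)) \<in> borel_measurable (M \<Otimes>\<^sub>M M)"
proof -
  obtain D :: "'a set" where D: "countable D" "\<And>x e. e > 0 \<Longrightarrow> \<exists>q\<in>D. dist x q < e"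
    using separable by blast
  have mq: "(\<lambda>z. dist (fst z) q + dist q (snd z)) \<in> borel_measurable (M \<Otimes>\<^sub>M M)" for q
  proof -
    have "(\<lambda>x. dist x q) \<in> borel_measurable M"
      by (rule borel_measurable_subalgebra[OF borM]) (auto simp: spM borel_measurable_continuous_onI continuous_on_dist)
    moreover have "(\<lambda>x. dist q x) \<in> borel_measurable M"
      by (rule borel_measurable_subalgebra[OF borM]) (auto simp: spM borel_measurable_continuous_onI continuous_on_dist)
    ultimately have a: "(\<lambda>z. dist (fst z) q) \<in> borel_measurable (M \<Otimes>\<^sub>M M)"
      and b: "(\<lambda>z. dist q (snd z)) \<in> borel_measurable (M \<Otimes>\<^sub>M M)"
      using measurable_compose[OF measurable_fst] measurable_compose[OF measurable_snd] by auto
    show ?thesis using borel_measurable_add[OF a b] by simp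
  qed
  show ?thesis unfolding borel_measurable_iff_less
  proof
    fix a
    have eq: "{z \<in> space (M \<Otimes>\<^sub>M M). dist (fst z) (snd z) < a} =
      (\<Union>q\<in>D. {z \<in> space (M \<Otimes>\<^sub>M M). dist (fst z) q + dist q (snd z) < a})"
    proof (intro equalityI subsetI)
      fix z assume "z \<in> {z \<in> space (M \<Otimes>\<^sub>M M). dist (fst z) (snd z) < a}"
      then have z: "z \<in> space (M \<Otimes>\<^sub>M M)" "dist (fst z) (snd z) < a" by auto
      then obtain q where q: "q \<in> D" "dist (fst z) q < (a - dist (fst z) (snd z))/2"
        using D(2)[of "(a - dist (fst z) (snd z))/2" "fst z"] by auto
      have "dist q (snd z) \<le> dist q (fst z) + dist (fst z) (snd z)" by (rule dist_triangle)
      then have "dist (fst z) q + dist q (snd z) < a" using q(2) by (simp add: dist_commute)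
      then show "z \<in> (\<Union>q\<in>D. {z \<in> space (M \<Otimes>\<^sub>M M). dist (fst z) q + dist q (snd z) < a})"
        using q z by auto
    next
      fix z assume "z \<in> (\<Union>q\<in>D. {z \<in> space (M \<Otimes>\<^sub>M M). dist (fst z) q + dist q (snd z) < a})"
      then obtain q where "z \<in> space (M \<Otimes>\<^sub>M M)" "dist (fst z) q + dist q (snd z) < a" by auto
      then show "z \<in> {z \<in> space (M \<Otimes>\<^sub>M M). dist (fst z) (snd z) < a}"
        using dist_triangle[of "fst z" "snd z" q] by auto
    qed
    show "{z \<in> space (M \<Otimes>\<^sub>M M). dist (fst z) (snd z) < a} \<in> sets (M \<Otimes>\<^sub>M M)"
      unfolding eq
    proof (intro sets.countable_UN'' D(1))
      fix q show "{z \<in> space (M \<Otimes>\<^sub>M M). dist (fst z) q + dist q (snd z) < a} \<in> sets (M \<Otimes>\<^sub>M M)"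
        using mq[of q] by measurable
    qed
  qed
qed

lemma Kern_meas: "(\<lambda>z. Kern M s (fst z) (snd z)) \<in> borel_measurable (M \<Otimes>\<^sub>M M)"
proof -
  note [measurable] = dist_meas
  have g1[measurable]: "(\<lambda>z. emeasure M (ball (fst z) (dist (fst z) (snd z)))) \<in> borel_measurable (M \<Otimes>\<^sub>M M)"
    by (rule ball_comp_meas) (auto intro: dist_meas)
  have g2[measurable]: "(\<lambda>z. emeasure M (ball (snd z) (dist (fst z) (snd z)))) \<in> borel_measurable (M \<Otimes>\<^sub>M M)"
    by (rule ball_comp_meas) (auto intro: dist_meas)
  have eq: "(\<lambda>z. Kern M s (fst z) (snd z)) = (\<lambda>z. if dist (fst z) (snd z) = 0 then \<infinity> else
     ennreal (2 / (dist (fst z) (snd z) powr s *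
        (enn2real (emeasure M (ball (fst z) (dist (fst z) (snd z)))) +
         enn2real (emeasure M (ball (snd z) (dist (fst z) (snd z))))))))"
    by (auto simp: Kern_def measure_def dist_commute)
  show ?thesis unfolding eq by measurable
qed

end



context dbl begin

definition cc :: "'a set \<Rightarrow> 'a set \<Rightarrow> 'a \<times> 'a \<Rightarrow> ennreal" where
  "cc \<Omega> E z = indicator (E \<inter> \<Omega>) (fst z) * indicator (UNIV - E) (snd z)
     + indicator (E - \<Omega>) (fst z) * indicator (\<Omega> - E) (snd z)"

lemma cc_meas[measurable]: "\<Omega> \<in> sets M \<Longrightarrow> E \<in> sets M \<Longrightarrow> cc \<Omega> E \<in> borel_measurable (M \<Otimes>\<^sub>M M)"
  unfolding cc_def using spM by measurable (auto simp: spM)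

lemma Ls_prod:
  assumes [measurable]: "A \<in> sets M" "B \<in> sets M"
  shows "Ls M s A B = (\<integral>\<^sup>+z. Kern M s (fst z) (snd z) * (indicator A (fst z) * indicator B (snd z)) \<partial>(M \<Otimes>\<^sub>M M))"
proof -
  interpret sigma_finite_measure M by (rule sigma_finite)
  note [measurable] = Kern_meas[of s]
  have "Ls M s A B = (\<integral>\<^sup>+x. \<integral>\<^sup>+y. Kern M s x y * (indicator A x * indicator B y) \<partial>M \<partial>M)"
    unfolding Ls_def
  proof (intro nn_integral_cong)
    fix x
    show "(\<integral>\<^sup>+y. Kern M s x y * indicator B y \<partial>M) * indicator A x =
      (\<integral>\<^sup>+y. Kern M s x y * (indicator A x * indicator B y) \<partial>M)"
      by (cases "x \<in> A") (auto simp: mult.commute mult.left_commute)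
  qed
  also have "\<dots> = (\<integral>\<^sup>+z. Kern M s (fst z) (snd z) * (indicator A (fst z) * indicator B (snd z)) \<partial>(M \<Otimes>\<^sub>M M))"
    using nn_integral_fst[of "\<lambda>z. Kern M s (fst z) (snd z) * (indicator A (fst z) * indicator B (snd z))" M]
    by simp
  finally show ?thesis .
qed

lemma Js_prod:
  assumes [measurable]: "\<Omega> \<in> sets M" "E \<in> sets M"
  shows "Js M s \<Omega> E = (\<integral>\<^sup>+z. Kern M s (fst z) (snd z) * cc \<Omega> E z \<partial>(M \<Otimes>\<^sub>M M))"
proof -
  note [measurable] = Kern_meas[of s]
  have [measurable]: "UNIV - E \<in> sets M" using spM by (metis assms(2) sets.compl_sets)
  have "Js M s \<Omega> E = (\<integral>\<^sup>+z. Kern M s (fst z) (snd z) * (indicator (E \<inter> \<Omega>) (fst z) * indicator (UNIV - E) (snd z)) \<partial>(M \<Otimes>\<^sub>M M))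
     + (\<integral>\<^sup>+z. Kern M s (fst z) (snd z) * (indicator (E - \<Omega>) (fst z) * indicator (\<Omega> - E) (snd z)) \<partial>(M \<Otimes>\<^sub>M M))"
    unfolding Js_def by (simp add: Ls_prod)
  also have "\<dots> = (\<integral>\<^sup>+z. Kern M s (fst z) (snd z) * (indicator (E \<inter> \<Omega>) (fst z) * indicator (UNIV - E) (snd z))
     + Kern M s (fst z) (snd z) * (indicator (E - \<Omega>) (fst z) * indicator (\<Omega> - E) (snd z)) \<partial>(M \<Otimes>\<^sub>M M))"
    by (rule nn_integral_add[symmetric]) measurable
  also have "\<dots> = (\<integral>\<^sup>+z. Kern M s (fst z) (snd z) * cc \<Omega> E z \<partial>(M \<Otimes>\<^sub>M M))"
    unfolding cc_def by (simp add: distrib_left)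
  finally show ?thesis .
qed

lemma cc_submod: "cc \<Omega> (E \<union> F) z + cc \<Omega> (E \<inter> F) z \<le> cc \<Omega> E z + cc \<Omega> F z"
  unfolding cc_def indicator_def by auto

lemma Js_submod:
  assumes [measurable]: "\<Omega> \<in> sets M" "E \<in> sets M" "F \<in> sets M"
  shows "Js M s \<Omega> (E \<union> F) + Js M s \<Omega> (E \<inter> F) \<le> Js M s \<Omega> E + Js M s \<Omega> F"
proof -
  note [measurable] = Kern_meas[of s]
  let ?K = "\<lambda>z. Kern M s (fst z) (snd z)"
  have "Js M s \<Omega> (E \<union> F) + Js M s \<Omega> (E \<inter> F) =
    (\<integral>\<^sup>+z. ?K z * cc \<Omega> (E \<union> F) z + ?K z * cc \<Omega> (E \<inter> F) z \<partial>(M \<Otimes>\<^sub>M M))"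
    by (simp add: Js_prod nn_integral_add)
  also have "\<dots> \<le> (\<integral>\<^sup>+z. ?K z * cc \<Omega> E z + ?K z * cc \<Omega> F z \<partial>(M \<Otimes>\<^sub>M M))"
  proof (rule nn_integral_mono)
    fix z
    have "?K z * (cc \<Omega> (E \<union> F) z + cc \<Omega> (E \<inter> F) z) \<le> ?K z * (cc \<Omega> E z + cc \<Omega> F z)"
      by (intro mult_left_mono cc_submod) auto
    then show "?K z * cc \<Omega> (E \<union> F) z + ?K z * cc \<Omega> (E \<inter> F) z \<le> ?K z * cc \<Omega> E z + ?K z * cc \<Omega> F z"
      by (simp add: distrib_left)
  qed
  also have "\<dots> = Js M s \<Omega> E + Js M s \<Omega> F"
    by (simp add: Js_prod nn_integral_add)
  finally show ?thesis .
qed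

lemma Js_fatou:
  assumes [measurable]: "\<Omega> \<in> sets M" "H \<in> sets M" "\<And>n. G n \<in> sets M"
    and conv: "\<And>x. eventually (\<lambda>n. x \<in> G n \<longleftrightarrow> x \<in> H) sequentially"
    and bd: "\<And>n. Js M s \<Omega> (G n) \<le> c"
  shows "Js M s \<Omega> H \<le> c"
proof -
  note [measurable] = Kern_meas[of s]
  let ?K = "\<lambda>z. Kern M s (fst z) (snd z)"
  have lim: "liminf (\<lambda>n. ?K z * cc \<Omega> (G n) z) = ?K z * cc \<Omega> H z" for z
  proof (rule lim_imp_Liminf)
    have "eventually (\<lambda>n. (fst z \<in> G n \<longleftrightarrow> fst z \<in> H) \<and> (snd z \<in> G n \<longleftrightarrow> snd z \<in> H)) sequentially"
      using conv[of "fst z"] conv[of "snd z"] by (rule eventually_conj)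
    then have "eventually (\<lambda>n. ?K z * cc \<Omega> (G n) z = ?K z * cc \<Omega> H z) sequentially"
      by eventually_elim (simp add: cc_def indicator_def)
    then show "((\<lambda>n. ?K z * cc \<Omega> (G n) z) \<longlongrightarrow> ?K z * cc \<Omega> H z) sequentially"
      by (rule tendsto_eventually)
  qed simp
  have "Js M s \<Omega> H = (\<integral>\<^sup>+z. liminf (\<lambda>n. ?K z * cc \<Omega> (G n) z) \<partial>(M \<Otimes>\<^sub>M M))"
    by (simp add: Js_prod lim)
  also have "\<dots> \<le> liminf (\<lambda>n. \<integral>\<^sup>+z. ?K z * cc \<Omega> (G n) z \<partial>(M \<Otimes>\<^sub>M M))"
    by (rule nn_integral_liminf) measurable
  also have "\<dots> = liminf (\<lambda>n. Js M s \<Omega> (G n))"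
    by (simp add: Js_prod)
  also have "\<dots> \<le> limsup (\<lambda>n. Js M s \<Omega> (G n))"
    by (rule Liminf_le_Limsup) simp
  also have "\<dots> \<le> c"
    by (rule Limsup_bounded) (simp add: bd)
  finally show ?thesis .
qed

end



context dbl begin

lemma exists_min:
  assumes Om[measurable]: "\<Omega> \<in> sets M" and adm: "admissible M s \<Omega> F \<noteq> {}"
  shows "\<exists>E. is_minimizer M s \<Omega> F E"
proof -
  have U[simp]: "UNIV \<in> sets M" by (metis spM sets.top)
  define P where "P = {E \<in> sets M. E - \<Omega> = F - \<Omega>}"
  define m where "m = (INF E\<in>P. Js M s \<Omega> E)"
  obtain E0 where E0: "E0 \<in> P" "Js M s \<Omega> E0 < \<infinity>" using adm unfolding admissible_def P_def by auto
  have "m \<le> Js M s \<Omega> E0" unfolding m_def using E0(1) by (rule INF_lower)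
  then have "m < \<infinity>" using E0 by auto
  then obtain mr where mr: "m = ennreal mr" "mr \<ge> 0"
    by (metis ennreal_cases infinity_ennreal_def less_irrefl)
  have mle: "ennreal mr \<le> Js M s \<Omega> E" if "E \<in> P" for E
    using that unfolding mr(1)[symmetric] m_def by (rule INF_lower)
  have "\<exists>E\<in>P. Js M s \<Omega> E < ennreal (mr + 1/2^n)" for n :: nat
  proof -
    have "m < ennreal (mr + 1/2^n)" using mr by (simp add: ennreal_less_iff)
    then show ?thesis unfolding m_def by (simp add: INF_less_iff)
  qed
  then have "\<forall>n. \<exists>E. E \<in> P \<and> Js M s \<Omega> E < ennreal (mr + 1/2^n)" by blast
  from choice[OF this] obtain E where E0: "\<forall>n. E n \<in> P \<and> Js M s \<Omega> (E n) < ennreal (mr + 1/2^n)"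
    by blast
  then have E: "\<And>n. E n \<in> P" "\<And>n. Js M s \<Omega> (E n) \<le> ennreal (mr + 1/2^n)"
    by (auto intro: less_imp_le)
  have Em[measurable]: "E n \<in> sets M" for n using E(1) by (simp add: P_def)
  have Eout: "x \<notin> \<Omega> \<Longrightarrow> x \<in> E n \<longleftrightarrow> x \<in> F" for x n using E(1)[of n] by (auto simp: P_def)
  define G where "G k d = (\<Inter>n\<in>{k..k+d}. E n)" for k d :: nat
  have GP: "G k d \<in> P" for k d
  proof -
    have "G k d \<in> sets M" unfolding G_def by (intro sets.finite_INT) auto
    moreover have "G k d - \<Omega> = F - \<Omega>"
    proof -
      have "x \<in> G k d \<longleftrightarrow> x \<in> F" if "x \<notin> \<Omega>" for x
      proof
        assume "x \<in> G k d" then have "x \<in> E k" unfolding G_def by simp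
        then show "x \<in> F" using Eout[OF that] by simp
      next
        assume "x \<in> F" then show "x \<in> G k d" unfolding G_def using Eout[OF that] by simp
      qed
      then show ?thesis by blast
    qed
    ultimately show ?thesis by (simp add: P_def)
  qed
  have UP: "A \<union> B \<in> P" if "A \<in> P" "B \<in> P" for A B using that by (auto simp: P_def)
  have Gbd: "Js M s \<Omega> (G k d) \<le> ennreal (mr + 2/2^k - 1/2^(k+d))" for k d
  proof (induction d)
    case 0
    have "G k 0 = E k" unfolding G_def by simp
    moreover have "mr + 2/2^k - 1/2^(k+0) = mr + 1/2^k" by (simp add: field_simps)
    ultimately show ?case using E(2)[of k] by (simp only:)
  next
    case (Suc d)
    have eq: "G k (Suc d) = G k d \<inter> E (k + Suc d)" unfolding G_def
      by (auto simp: le_Suc_eq)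
    have "ennreal mr + Js M s \<Omega> (G k (Suc d)) \<le> Js M s \<Omega> (G k d \<union> E (k + Suc d)) + Js M s \<Omega> (G k (Suc d))"
      using mle[OF UP[OF GP E(1)]] by (intro add_right_mono) auto
    also have "\<dots> \<le> Js M s \<Omega> (G k d) + Js M s \<Omega> (E (k + Suc d))"
      unfolding eq using GP[of k d] by (intro Js_submod) (auto simp: P_def)
    also have "\<dots> \<le> ennreal (mr + 2/2^k - 1/2^(k+d)) + ennreal (mr + 1/2^(k + Suc d))"
      using Suc.IH E(2)[of "k + Suc d"] by (intro add_mono) (simp_all only:)
    also have "\<dots> = ennreal mr + ennreal (mr + 2/2^k - 1/2^(k + Suc d))"
    proof -
      have "(1::real)/2^(k+d) \<le> 1/2^k" by (simp add: field_simps)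
      also have "\<dots> \<le> 2/2^k" by (simp add: field_simps)
      finally have a: "0 \<le> mr + 2/2^k - 1/2^(k+d)" using mr by simp
      have p: "(2::real)^(k+d) \<le> 2^(k+Suc d)" by (intro power_increasing) auto
      have "(1::real)/2^(k+Suc d) \<le> 1/2^(k+d)" using p by (intro divide_left_mono) auto
      then have b: "0 \<le> mr + 2/2^k - 1/2^(k + Suc d)" using a by linarith
      have "(mr + 2/2^k - 1/2^(k+d)) + (mr + 1/2^(k + Suc d)) = mr + (mr + 2/2^k - 1/2^(k + Suc d))"
        by (simp add: field_simps)
      then show ?thesis using a b mr by (simp add: ennreal_plus[symmetric] del: ennreal_plus)
    qed
    finally show ?case by (simp add: ennreal_add_left_cancel_le)
  qed
  define Hk where "Hk k = (\<Inter>n\<in>{k..}. E n)" for k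
  have Hkm[measurable]: "Hk k \<in> sets M" for k unfolding Hk_def by (intro sets.countable_INT'') auto
  have Hkbd: "Js M s \<Omega> (Hk k) \<le> ennreal (mr + 2/2^k)" for k
  proof (rule Js_fatou[of \<Omega> "Hk k" "G k"])
    show "G k d \<in> sets M" for d using GP by (simp add: P_def)
    show "Js M s \<Omega> (G k d) \<le> ennreal (mr + 2/2^k)" for d
      using Gbd[of k d] by (rule order_trans) (simp add: ennreal_leI)
    fix x
    show "eventually (\<lambda>d. x \<in> G k d \<longleftrightarrow> x \<in> Hk k) sequentially"
    proof (cases "x \<in> Hk k")
      case True then show ?thesis unfolding G_def Hk_def by auto
    next
      case False
      then obtain n0 where n0: "n0 \<ge> k" "x \<notin> E n0" unfolding Hk_def by auto
      show ?thesis unfolding eventually_sequentially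
      proof (intro exI[of _ "n0 - k"] allI impI)
        fix d assume "n0 - k \<le> d"
        then have "x \<notin> G k d" using n0 unfolding G_def by auto
        then show "x \<in> G k d \<longleftrightarrow> x \<in> Hk k" using False by auto
      qed
    qed
  qed simp_all
  define H where "H = (\<Union>k. Hk k)"
  have Hm[measurable]: "H \<in> sets M" unfolding H_def by auto
  have HP: "H \<in> P"
  proof -
    have "H - \<Omega> = F - \<Omega>" unfolding H_def Hk_def using Eout by auto
    then show ?thesis using Hm by (simp add: P_def)
  qed
  have Hle: "Js M s \<Omega> H \<le> m"
    unfolding mr(1)
  proof (rule ennreal_le_epsilon)
    fix e :: real assume e: "0 < e"
    have "1 < (2::real)" by simp
    from real_arch_pow[OF this, of "2/e"] obtain K where K: "2/e < 2^K" by auto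
    then have K': "2/2^K < e" using e by (simp add: field_simps)
    have "Js M s \<Omega> H \<le> ennreal (mr + e)"
    proof (rule Js_fatou[of \<Omega> H "\<lambda>j. Hk (K + j)"])
      show "Js M s \<Omega> (Hk (K + j)) \<le> ennreal (mr + e)" for j
      proof -
        have "(2::real)/2^(K+j) \<le> 2/2^K" by (simp add: field_simps)
        then show ?thesis using Hkbd[of "K+j"] K' by (rule_tac order_trans) (auto intro!: ennreal_leI)
      qed
      fix x
      show "eventually (\<lambda>j. x \<in> Hk (K + j) \<longleftrightarrow> x \<in> H) sequentially"
      proof (cases "x \<in> H")
        case False then show ?thesis unfolding H_def by auto
      next
        case True
        then obtain k0 where "x \<in> Hk k0" unfolding H_def by auto
        then have "x \<in> Hk (K + j)" if "j \<ge> k0" for j using that unfolding Hk_def by auto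
        then show ?thesis using True unfolding eventually_sequentially by blast
      qed
    qed auto
    then show "Js M s \<Omega> H \<le> ennreal mr + ennreal e" using mr e by (simp add: ennreal_plus)
  qed
  show ?thesis unfolding is_minimizer_def
  proof (intro exI[of _ H] conjI ballI impI)
    show "H \<in> sets M" by simp
    show "Js M s \<Omega> H < \<infinity>" using Hle \<open>m < \<infinity>\<close> by auto
    show "H - \<Omega> = F - \<Omega>" using HP by (simp add: P_def)
    fix E' assume "E' \<in> sets M" "E' - \<Omega> = F - \<Omega>"
    then have "E' \<in> P" by (simp add: P_def)
    then show "Js M s \<Omega> H \<le> Js M s \<Omega> E'" using Hle mle mr by (metis order_trans)
  qed
qed

end

theorem theorem5p3:
  fixes M :: "('a::complete_space) measure" and \<Omega> F :: "'a set" and s :: real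
  assumes "space M = UNIV"
    and "doubling_measure M"
    and "borel_regular M"
    and "domain \<Omega>" and "bounded \<Omega>"
    and "0 < s" and "s < 1"
    and "F \<in> sets M" and "F - \<Omega> \<noteq> {}"
    and "admissible M s \<Omega> F \<noteq> {}"
  shows "\<exists>E. is_minimizer M s \<Omega> F E"
proof -
  interpret dbl M
    using assms(1,2,3) by unfold_locales (auto simp: borel_regular_def)
  have "\<Omega> \<in> sets M" using assms(4) open_sets by (simp add: domain_def)
  then show ?thesis using assms(10) by (rule exists_min)
qed

end
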